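(* Let $\alpha\in(0,\pi)$ and let $G\subset S_\alpha$ be a domain such that for some $r>0$, \[ G\cap B^2(r)=S_\alpha\cap B^2(r). \] Then $A_G\ge A_{S_\alpha}$.
   Context: $S_\alpha=\{\rho e^{it}:\rho>0,\ t\in(0,\alpha)\}\subset\mathbb{R}^2=\mathbb{C}$, and $B^2(r)$ is the open disk of radius $r$ centered at the origin. For a domain $G\subsetneq\mathbb{R}^n$ let $d_G(x)=d(x,\partial G)$; $k_G(x,y)=\inf_\gamma\int_\gamma\frac{|dx|}{d_G(x)}$ over rectifiable curves $\gamma\subset G$ joining $x,y$ (quasihyperbolic distance); $j_G(x,y)=\log\left(1+\frac{|x-y|}{\min\{d_G(x),d_G(y)\}}\right)$; and $A_G=\inf\{A\ge1: k_G\le A\,j_G\text{ on }G\times G\}$ (with $\inf\emptyset=+\infty$). *)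

theory Defs
  imports "HOL-Analysis.Analysis"
begin

definition sector :: "real \<Rightarrow> complex set" where
  "sector \<alpha> = {z. \<exists>\<rho> t. \<rho> > 0 \<and> 0 < t \<and> t < \<alpha> \<and> z = rcis \<rho> t}"

definition curve_variation :: "(real \<Rightarrow> 'a::real_normed_vector) \<Rightarrow> real \<Rightarrow> real \<Rightarrow> ereal" where
  "curve_variation g a b =
     Sup {ereal (\<Sum>i<n. dist (g (p i)) (g (p (Suc i)))) | p n.
            p 0 = a \<and> p n = b \<and> (\<forall>i<n. p i \<le> p (Suc i))}"

definition rectifiable_path :: "(real \<Rightarrow> 'a::real_normed_vector) \<Rightarrow> bool" where
  "rectifiable_path g \<longleftrightarrow> path g \<and> curve_variation g 0 1 < \<infinity>"

definition arclength_fun :: "(real \<Rightarrow> 'a::real_normed_vector) \<Rightarrow> real \<Rightarrow> real" where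
  "arclength_fun g t = real_of_ereal (curve_variation g 0 (max 0 (min 1 t)))"

definition arclength_integral :: "(real \<Rightarrow> 'a::real_normed_vector) \<Rightarrow> ('a \<Rightarrow> real) \<Rightarrow> ennreal" where
  "arclength_integral g f =
     (\<integral>\<^sup>+ t. ennreal (f (g t)) * indicator {0<..1} t \<partial>interval_measure (arclength_fun g))"

definition dG :: "'a::real_normed_vector set \<Rightarrow> 'a \<Rightarrow> real" where
  "dG G x = infdist x (frontier G)"

definition qh_dist :: "'a::real_normed_vector set \<Rightarrow> 'a \<Rightarrow> 'a \<Rightarrow> ennreal" where
  "qh_dist G x y =
     (INF g \<in> {g. rectifiable_path g \<and> path_image g \<subseteq> G \<and> pathstart g = x \<and> pathfinish g = y}.
        arclength_integral g (\<lambda>z. 1 / dG G z))"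

definition j_dist :: "'a::real_normed_vector set \<Rightarrow> 'a \<Rightarrow> 'a \<Rightarrow> real" where
  "j_dist G x y = ln (1 + dist x y / min (dG G x) (dG G y))"

text \<open>A_G = inf {A >= 1 : k_G <= A j_G on G x G}, with inf of the empty set = +infinity.\<close>
definition A_const :: "'a::real_normed_vector set \<Rightarrow> ereal" where
  "A_const G = Inf {ereal A | A. A \<ge> 1 \<and>
      (\<forall>x\<in>G. \<forall>y\<in>G. qh_dist G x y \<le> ennreal (A * j_dist G x y))}"

end

theory Submission
  imports Defs
begin



lemma im_Ioc_of_ext:
  assumes "\<exists>\<mu>'. (\<forall>i\<in>{(a,b). a \<le> b}. \<mu>' ((\<lambda>(a,b). {a<..b}) i) = (\<lambda>(a,b). ennreal (F b - F a)) i)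
      \<and> measure_space UNIV (sigma_sets UNIV ((\<lambda>(a,b). {a<..b::real}) ` {(a,b). a \<le> b})) \<mu>'"
    and "a \<le> b"
  shows "emeasure (interval_measure F) {a<..b} = ennreal (F b - F a)"
proof -
  obtain \<mu>' where eq: "\<forall>i\<in>{(a,b). a \<le> b}. \<mu>' ((\<lambda>(a,b). {a<..b}) i) = (\<lambda>(a,b). ennreal (F b - F a)) i"
    and ms: "measure_space UNIV (sigma_sets UNIV ((\<lambda>(a,b). {a<..b::real}) ` {(a,b). a \<le> b})) \<mu>'"
    using assms(1) by blast
  have sets: "sets (interval_measure F) = sigma_sets UNIV ((\<lambda>(a,b). {a<..b::real}) ` {(a,b). a \<le> b})"
    unfolding interval_measure_def by (rule sets_extend_measure) auto
  show ?thesis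
    apply (rule emeasure_extend_measure_Pair[OF interval_measure_def, where \<mu>'=\<mu>'])
    apply (unfold sets)
    using eq ms assms(2) by (auto simp: measure_space_def)
qed

lemma im_scale_Q:
  fixes F :: "real \<Rightarrow> real"
  assumes Q: "\<And>a b. a \<le> b \<Longrightarrow> emeasure (interval_measure F) {a<..b} = ennreal (F b - F a)"
    and c: "c > 0"
  shows "interval_measure (\<lambda>t. c * F t) = scale_measure (ennreal c) (interval_measure F)"
proof -
  let ?M = "interval_measure F" and ?N = "interval_measure (\<lambda>t. c * F t)"
  let ?S = "scale_measure (ennreal c) ?M"
  have msS: "measure_space (space ?S) (sets ?S) (emeasure ?S)" by (rule measure_space)
  have eqN: "emeasure ?N {a<..b} = ennreal (c * F b - c * F a)" if "a \<le> b" for a b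
  proof (rule emeasure_extend_measure_Pair[OF interval_measure_def, where \<mu>'="emeasure ?S"])
    fix a b :: real assume "a \<le> b"
    then show "emeasure ?S {a<..b} = ennreal (c * F b - c * F a)"
      using Q[of a b] c by (simp add: ennreal_mult'[symmetric] right_diff_distrib)
  next
    show "positive (sets ?N) (emeasure ?S)" "countably_additive (sets ?N) (emeasure ?S)"
      using msS by (simp_all add: measure_space_def)
  qed (use that in auto)
  show ?thesis
  proof (rule measure_eqI_generator_eq[where \<Omega>=UNIV and E="range (\<lambda>(a, b). {a<..b::real})"])
    fix X assume "X \<in> range (\<lambda>(a, b). {a<..b::real})"
    then obtain a b where Xeq: "X = {a<..b}" by auto
    show "emeasure ?N X = emeasure ?S X"
    proof (cases "a \<le> b")
      case True
      then show ?thesis using Xeq eqN[OF True] Q[OF True] c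
        by (simp add: ennreal_mult'[symmetric] right_diff_distrib)
    next
      case False
      then show ?thesis using Xeq by simp
    qed
  next
    show "(\<Union>i. {- real (i::nat)<..real i}) = UNIV"
    proof (safe; simp)
      fix x :: real
      obtain n :: nat where "\<bar>x\<bar> < real n" using reals_Archimedean2 by blast
      then show "\<exists>i::nat. - real i < x \<and> x \<le> real i" by (intro exI[of _ n]) auto
    qed
  next
    fix i :: nat
    show "emeasure ?N {- real i<..real i} \<noteq> \<infinity>" using eqN[of "- real i" "real i"] by simp
  qed (auto simp: borel_sigma_sets_Ioc Int_stable_def)
qed

lemma im_zero_if_not_ext:
  assumes "\<not> (\<exists>\<mu>'. (\<forall>i\<in>{(a,b). a \<le> b}. \<mu>' ((\<lambda>(a,b). {a<..b}) i) = (\<lambda>(a,b). ennreal (F b - F a)) i)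
      \<and> measure_space UNIV (sigma_sets UNIV ((\<lambda>(a,b). {a<..b::real}) ` {(a,b). a \<le> b})) \<mu>')"
  shows "interval_measure F = measure_of UNIV ((\<lambda>(a,b). {a<..b::real}) ` {(a,b). a \<le> b}) (\<lambda>_. 0)"
  using assms unfolding interval_measure_def extend_measure_def by auto

lemma emeasure_zero_measure_of:
  fixes E :: "'a set set"
  assumes "E \<subseteq> Pow \<Omega>"
  shows "emeasure (measure_of \<Omega> E (\<lambda>_. 0)) X = 0"
proof (cases "X \<in> sets (measure_of \<Omega> E (\<lambda>_. 0))")
  case True
  show ?thesis
    by (rule emeasure_measure_of[OF refl assms _ _ True])
       (auto simp: positive_def countably_additive_def)
next
  case False
  then show ?thesis by (simp add: emeasure_notin_sets)
qed

lemma im_scale: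
  fixes F :: "real \<Rightarrow> real"
  assumes c: "c > 0"
  shows "interval_measure (\<lambda>t. c * F t) = scale_measure (ennreal c) (interval_measure F)"
proof (cases "\<forall>a b. a \<le> b \<longrightarrow> emeasure (interval_measure F) {a<..b} = ennreal (F b - F a)")
  case True
  then show ?thesis using im_scale_Q[OF _ c, of F] by blast
next
  case False
  then obtain a b where ab: "a \<le> b" "emeasure (interval_measure F) {a<..b} \<noteq> ennreal (F b - F a)"
    by blast
  have nQ: "\<not> (\<forall>a b. a \<le> b \<longrightarrow> emeasure (interval_measure (\<lambda>t. c * F t)) {a<..b} = ennreal (c * F b - c * F a))"
  proof
    assume Q: "\<forall>a b. a \<le> b \<longrightarrow> emeasure (interval_measure (\<lambda>t. c * F t)) {a<..b} = ennreal (c * F b - c * F a)"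
    have "interval_measure (\<lambda>t. (1/c) * (c * F t)) = scale_measure (ennreal (1/c)) (interval_measure (\<lambda>t. c * F t))"
      by (rule im_scale_Q) (use Q c in auto)
    moreover have "(\<lambda>t. (1/c) * (c * F t)) = F" using c by auto
    ultimately have "interval_measure F = scale_measure (ennreal (1/c)) (interval_measure (\<lambda>t. c * F t))" by simp
    then have "emeasure (interval_measure F) {a<..b} = ennreal (1/c) * ennreal (c * F b - c * F a)"
      using Q ab(1) by simp
    also have "\<dots> = ennreal (F b - F a)" using c
      by (simp add: ennreal_mult'[symmetric] right_diff_distrib[symmetric])
    finally show False using ab(2) by simp
  qed
  have ne1: "\<not> (\<exists>\<mu>'. (\<forall>i\<in>{(a,b). a \<le> b}. \<mu>' ((\<lambda>(a,b). {a<..b}) i) = (\<lambda>(a,b). ennreal (F b - F a)) i)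
      \<and> measure_space UNIV (sigma_sets UNIV ((\<lambda>(a,b). {a<..b::real}) ` {(a,b). a \<le> b})) \<mu>')"
    using im_Ioc_of_ext[of F] False by blast
  have ne2: "\<not> (\<exists>\<mu>'. (\<forall>i\<in>{(a,b). a \<le> b}. \<mu>' ((\<lambda>(a,b). {a<..b}) i) = (\<lambda>(a,b). ennreal ((\<lambda>t. c * F t) b - (\<lambda>t. c * F t) a)) i)
      \<and> measure_space UNIV (sigma_sets UNIV ((\<lambda>(a,b). {a<..b::real}) ` {(a,b). a \<le> b})) \<mu>')"
    using im_Ioc_of_ext[of "\<lambda>t. c * F t"] nQ by blast
  have e1: "interval_measure F = measure_of UNIV ((\<lambda>(a,b). {a<..b::real}) ` {(a,b). a \<le> b}) (\<lambda>_. 0)"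
    by (rule im_zero_if_not_ext[OF ne1])
  have e2: "interval_measure (\<lambda>t. c * F t) = measure_of UNIV ((\<lambda>(a,b). {a<..b::real}) ` {(a,b). a \<le> b}) (\<lambda>_. 0)"
    by (rule im_zero_if_not_ext[OF ne2])
  show ?thesis
    by (rule measure_eqI) (auto simp: e1 e2 emeasure_zero_measure_of)
qed



lemma cv_scale:
  fixes g :: "real \<Rightarrow> 'a::real_normed_vector"
  assumes c: "c > 0" and ab: "a \<le> b"
  shows "curve_variation (\<lambda>t. c *\<^sub>R g t) a b = ereal c * curve_variation g a b"
proof -
  define P where "P = (\<lambda>(p::nat\<Rightarrow>real) n. p 0 = a \<and> p n = b \<and> (\<forall>i<n. p i \<le> p (Suc i)))"
  define Y where "Y = {ereal (\<Sum>i<n. dist (g (p i)) (g (p (Suc i)))) | p n. P p n}"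
  have dsc: "dist (c *\<^sub>R u) (c *\<^sub>R v) = c * dist u v" for u v :: 'a
    using c by (simp add: dist_norm scaleR_diff_right[symmetric])
  have eq: "{ereal (\<Sum>i<n. dist (c *\<^sub>R g (p i)) (c *\<^sub>R g (p (Suc i)))) | p n. P p n} = (\<lambda>x. ereal c * x) ` Y"
  proof (rule set_eqI, rule iffI)
    fix x assume "x \<in> {ereal (\<Sum>i<n. dist (c *\<^sub>R g (p i)) (c *\<^sub>R g (p (Suc i)))) | p n. P p n}"
    then obtain p n where "P p n" "x = ereal (\<Sum>i<n. dist (c *\<^sub>R g (p i)) (c *\<^sub>R g (p (Suc i))))" by blast
    then show "x \<in> (\<lambda>x. ereal c * x) ` Y" unfolding Y_def
      by (intro image_eqI[of _ _ "ereal (\<Sum>i<n. dist (g (p i)) (g (p (Suc i))))"]) (auto simp: dsc sum_distrib_left)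
  next
    fix x assume "x \<in> (\<lambda>x. ereal c * x) ` Y"
    then obtain p n where "P p n" "x = ereal c * ereal (\<Sum>i<n. dist (g (p i)) (g (p (Suc i))))" unfolding Y_def by blast
    then show "x \<in> {ereal (\<Sum>i<n. dist (c *\<^sub>R g (p i)) (c *\<^sub>R g (p (Suc i)))) | p n. P p n}"
      by (auto simp: dsc sum_distrib_left)
  qed
  have ne: "Y \<noteq> {}"
  proof -
    have "P (\<lambda>i. if i = 0 then a else b) 1" using ab by (auto simp: P_def)
    then show ?thesis unfolding Y_def by blast
  qed
  have "curve_variation (\<lambda>t. c *\<^sub>R g t) a b = Sup ((\<lambda>x. ereal c * x) ` Y)"
    unfolding curve_variation_def eq[unfolded P_def, symmetric] P_def by simp
  also have "\<dots> = ereal c * Sup Y"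
    using Sup_ereal_mult_left'[OF ne, of c "\<lambda>x. x"] c by simp
  also have "Sup Y = curve_variation g a b" unfolding Y_def P_def curve_variation_def by simp
  finally show ?thesis .
qed

lemma af_scale:
  fixes g :: "real \<Rightarrow> 'a::real_normed_vector"
  assumes c: "c > 0"
  shows "arclength_fun (\<lambda>t. c *\<^sub>R g t) = (\<lambda>t. c * arclength_fun g t)"
  by (rule ext) (simp add: arclength_fun_def cv_scale[OF c])



lemma ai_scale:
  fixes g :: "real \<Rightarrow> 'a::real_normed_vector"
  assumes c: "c > 0" and g: "continuous_on {0..1} g" and f: "f \<in> borel_measurable borel"
    and fs: "\<And>t. t \<in> {0<..1} \<Longrightarrow> f (c *\<^sub>R g t) = f (g t) / c"
  shows "arclength_integral (\<lambda>t. c *\<^sub>R g t) f = arclength_integral g f"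
proof -
  define cl where "cl = (\<lambda>t::real. max 0 (min 1 t))"
  let ?\<mu> = "interval_measure (arclength_fun g)"
  define G0 where "G0 = (\<lambda>t. ennreal (f (g (cl t))) * indicator {0<..1} t)"
  have clc: "continuous_on UNIV cl" unfolding cl_def by (intro continuous_intros)
  have gcl: "continuous_on UNIV (\<lambda>t. g (cl t))"
    by (rule continuous_on_compose2[OF g clc]) (auto simp: cl_def)
  have gm: "(\<lambda>t. g (cl t)) \<in> borel_measurable borel"
    by (rule borel_measurable_continuous_onI[OF gcl])
  have fm: "(\<lambda>t. f (g (cl t))) \<in> borel_measurable borel"
    using measurable_compose[OF gm f] by (simp add: o_def)
  have G0m: "G0 \<in> borel_measurable ?\<mu>"
    unfolding G0_def using fm by (simp add: measurable_cong_sets[OF sets_interval_measure refl] borel_measurable_indicator)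
  have pt: "ennreal (f (c *\<^sub>R g t)) * indicator {0<..1} t = ennreal (1/c) * G0 t" for t
  proof (cases "t \<in> {0<..1}")
    case True
    then have "cl t = t" by (auto simp: cl_def)
    then show ?thesis using True fs[OF True] c
      by (simp add: G0_def ennreal_mult'[symmetric] divide_inverse mult.commute)
  qed (simp add: G0_def)
  have pt2: "G0 t = ennreal (f (g t)) * indicator {0<..1} t" for t
  proof (cases "t \<in> {0<..1}")
    case True
    then have "cl t = t" by (auto simp: cl_def)
    then show ?thesis using True by (simp add: G0_def)
  qed (simp add: G0_def)
  have "arclength_integral (\<lambda>t. c *\<^sub>R g t) f
      = (\<integral>\<^sup>+ t. ennreal (1/c) * G0 t \<partial>scale_measure (ennreal c) ?\<mu>)"
    unfolding arclength_integral_def af_scale[OF c] im_scale[OF c] pt ..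
  also have "\<dots> = ennreal c * (ennreal (1/c) * integral\<^sup>N ?\<mu> G0)"
  proof -
    have m2: "(\<lambda>t. ennreal (1/c) * G0 t) \<in> borel_measurable ?\<mu>" using G0m by measurable
    show ?thesis by (simp add: nn_integral_scale_measure[OF m2] nn_integral_cmult[OF G0m])
  qed
  also have "\<dots> = integral\<^sup>N ?\<mu> G0"
    using c by (simp add: mult.assoc[symmetric] ennreal_mult'[symmetric])
  also have "\<dots> = arclength_integral g f"
    unfolding arclength_integral_def pt2 ..
  finally show ?thesis .
qed




lemma dG_eq_compl:
  fixes X :: "'a::euclidean_space set"
  assumes z: "z \<in> X" and w0: "w0 \<notin> X"
  shows "dG X z = infdist z (-X)"
proof -
  have hit: "\<exists>p\<in>frontier X. dist z p \<le> dist z w" if w: "w \<notin> X" for w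
  proof -
    have "closed_segment z w \<inter> frontier X \<noteq> {}"
      by (rule connected_Int_frontier) (use z w in auto)
    then obtain p where p: "p \<in> closed_segment z w" "p \<in> frontier X" by blast
    have "dist p z \<le> dist z w" using dist_in_closed_segment[OF p(1)] by simp
    then show ?thesis using p by (auto simp: dist_commute)
  qed
  have fne: "frontier X \<noteq> {}" using hit[OF w0] by blast
  have ne: "-X \<noteq> {}" using w0 by blast
  have le1: "infdist z (frontier X) \<le> infdist z (-X)"
    unfolding infdist_notempty[OF ne]
  proof (rule cINF_greatest[OF ne])
    fix w assume "w \<in> -X"
    then obtain p where "p \<in> frontier X" "dist z p \<le> dist z w" using hit by blast
    then show "infdist z (frontier X) \<le> dist z w" by (rule infdist_le2)
  qed
  have le2: "infdist z (-X) \<le> infdist z (frontier X)"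
    unfolding infdist_notempty[OF fne]
  proof (rule cINF_greatest[OF fne])
    fix p assume "p \<in> frontier X"
    then have "p \<in> closure (-X)" by (simp add: frontier_def closure_complement)
    then have "infdist p (-X) = 0" by (simp add: in_closure_iff_infdist_zero[OF ne])
    then show "infdist z (-X) \<le> dist z p" using infdist_triangle[of z "-X" p] by simp
  qed
  show ?thesis unfolding dG_def using le1 le2 by simp
qed

lemma infdist_scale_le:
  fixes A :: "'a::real_normed_vector set"
  assumes c: "c > 0" and inv: "\<And>a. a \<in> A \<Longrightarrow> c *\<^sub>R a \<in> A"
  shows "infdist (c *\<^sub>R x) A \<le> c * infdist x A"
proof (cases "A = {}")
  case True then show ?thesis by (simp add: infdist_def)
next
  case False
  have "infdist (c *\<^sub>R x) A / c \<le> infdist x A"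
    unfolding infdist_notempty[OF False, of x]
  proof (rule cINF_greatest[OF False])
    fix a assume a: "a \<in> A"
    have "infdist (c *\<^sub>R x) A \<le> dist (c *\<^sub>R x) (c *\<^sub>R a)" by (rule infdist_le[OF inv[OF a]])
    also have "\<dots> = c * dist x a" using c by (simp add: dist_norm scaleR_diff_right[symmetric])
    finally show "infdist (c *\<^sub>R x) A / c \<le> dist x a" using c by (simp add: divide_le_eq mult.commute)
  qed
  then show ?thesis using c by (simp add: divide_le_eq mult.commute)
qed

lemma infdist_scale:
  fixes A :: "'a::real_normed_vector set"
  assumes c: "c > 0" and inv: "\<And>a. c *\<^sub>R a \<in> A \<longleftrightarrow> a \<in> A"
  shows "infdist (c *\<^sub>R x) A = c * infdist x A"
proof (rule antisym)
  show "infdist (c *\<^sub>R x) A \<le> c * infdist x A" by (rule infdist_scale_le) (use c inv in auto)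
  have inv2: "(1/c) *\<^sub>R a \<in> A" if "a \<in> A" for a
    using inv[of "(1/c) *\<^sub>R a"] that c by simp
  have "infdist ((1/c) *\<^sub>R (c *\<^sub>R x)) A \<le> (1/c) * infdist (c *\<^sub>R x) A"
    by (rule infdist_scale_le) (use c inv2 in auto)
  then show "c * infdist x A \<le> infdist (c *\<^sub>R x) A" using c by (simp add: field_simps)
qed

lemma sector_scale:
  assumes c: "c > 0" and z: "z \<in> sector \<alpha>"
  shows "c *\<^sub>R z \<in> sector \<alpha>"
proof -
  obtain \<rho> t where "\<rho> > 0" "0 < t" "t < \<alpha>" "z = rcis \<rho> t" using z by (auto simp: sector_def)
  then show ?thesis using c unfolding sector_def
    by (intro CollectI exI[of _ "c * \<rho>"] exI[of _ t]) (auto simp: rcis_def scaleR_conv_of_real)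
qed

lemma sector_scale_iff:
  assumes c: "c > 0"
  shows "c *\<^sub>R z \<in> sector \<alpha> \<longleftrightarrow> z \<in> sector \<alpha>"
  using sector_scale[OF c, of z] sector_scale[of "1/c" "c *\<^sub>R z"] c by auto

lemma zero_notin_sector: "0 \<notin> sector \<alpha>"
  by (auto simp: sector_def rcis_def)

lemma dG_sector_scale:
  assumes c: "c > 0" and z: "z \<in> sector \<alpha>"
  shows "dG (sector \<alpha>) (c *\<^sub>R z) = c * dG (sector \<alpha>) z"
proof -
  have "dG (sector \<alpha>) (c *\<^sub>R z) = infdist (c *\<^sub>R z) (- sector \<alpha>)"
    by (rule dG_eq_compl[OF sector_scale[OF c z] zero_notin_sector])
  also have "\<dots> = c * infdist z (- sector \<alpha>)"
    by (rule infdist_scale[OF c]) (use sector_scale_iff[OF c] in auto)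
  also have "\<dots> = c * dG (sector \<alpha>) z"
    using dG_eq_compl[OF z zero_notin_sector] by simp
  finally show ?thesis .
qed


lemma dG_measurable: "(\<lambda>z. 1 / dG (X::'a::euclidean_space set) z) \<in> borel_measurable borel"
proof -
  have dm: "(\<lambda>z. dG X z) \<in> borel_measurable borel"
    by (rule borel_measurable_continuous_onI) (simp add: dG_def continuous_on_infdist continuous_on_id)
  show ?thesis using dm by measurable
qed

lemma qh_sector_scale:
  assumes l: "l > 0"
  shows "qh_dist (sector \<alpha>) x y \<le> qh_dist (sector \<alpha>) (l *\<^sub>R x) (l *\<^sub>R y)"
  unfolding qh_dist_def
proof (rule INF_mono)
  fix g assume "g \<in> {g. rectifiable_path g \<and> path_image g \<subseteq> sector \<alpha> \<and> pathstart g = l *\<^sub>R x \<and> pathfinish g = l *\<^sub>R y}"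
  then have rp: "rectifiable_path g" and pi: "path_image g \<subseteq> sector \<alpha>"
    and ps: "pathstart g = l *\<^sub>R x" and pf: "pathfinish g = l *\<^sub>R y" by auto
  define h where "h = (\<lambda>t. (1/l) *\<^sub>R g t)"
  have pg: "path g" and cvg: "curve_variation g 0 1 < \<infinity>" using rp by (auto simp: rectifiable_path_def)
  have gc: "continuous_on {0..1} g" using pg by (simp add: path_def)
  have "path h" unfolding h_def path_def by (intro continuous_intros gc)
  moreover have "curve_variation h 0 1 < \<infinity>"
    unfolding h_def using cv_scale[of "1/l" 0 1 g] l cvg by (cases "curve_variation g 0 1") auto
  moreover have "path_image h \<subseteq> sector \<alpha>"
    using pi l by (auto simp: h_def path_image_def intro!: sector_scale)
  moreover have "pathstart h = x" "pathfinish h = y"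
    using ps pf l by (auto simp: h_def pathstart_def pathfinish_def)
  ultimately have hA: "h \<in> {g. rectifiable_path g \<and> path_image g \<subseteq> sector \<alpha> \<and> pathstart g = x \<and> pathfinish g = y}"
    by (auto simp: rectifiable_path_def)
  have "arclength_integral h (\<lambda>z. 1 / dG (sector \<alpha>) z) = arclength_integral g (\<lambda>z. 1 / dG (sector \<alpha>) z)"
    unfolding h_def
  proof (rule ai_scale[OF _ gc dG_measurable])
    show "0 < 1 / l" using l by simp
    fix t :: real assume "t \<in> {0<..1}"
    then have "g t \<in> sector \<alpha>" using pi by (auto simp: path_image_def)
    then show "1 / dG (sector \<alpha>) ((1 / l) *\<^sub>R g t) = 1 / dG (sector \<alpha>) (g t) / (1 / l)"
      using dG_sector_scale[of "1/l" "g t" \<alpha>] l by simp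
  qed
  then show "\<exists>n\<in>{g. rectifiable_path g \<and> path_image g \<subseteq> sector \<alpha> \<and> pathstart g = x \<and> pathfinish g = y}.
          arclength_integral n (\<lambda>z. 1 / dG (sector \<alpha>) z) \<le> arclength_integral g (\<lambda>z. 1 / dG (sector \<alpha>) z)"
    using hA by (intro bexI[of _ h]) auto
qed

lemma qh_sub:
  fixes G S :: "'a::euclidean_space set"
  assumes sub: "G \<subseteq> S" and d: "\<And>z. z \<in> G \<Longrightarrow> 0 < dG G z \<and> dG G z \<le> dG S z"
  shows "qh_dist S x y \<le> qh_dist G x y"
  unfolding qh_dist_def
proof (rule INF_mono)
  fix g assume g: "g \<in> {g. rectifiable_path g \<and> path_image g \<subseteq> G \<and> pathstart g = x \<and> pathfinish g = y}"
  have "arclength_integral g (\<lambda>z. 1 / dG S z) \<le> arclength_integral g (\<lambda>z. 1 / dG G z)"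
    unfolding arclength_integral_def
  proof (rule nn_integral_mono)
    fix t
    show "ennreal (1 / dG S (g t)) * indicator {0<..1} t \<le> ennreal (1 / dG G (g t)) * indicator {0<..1} t"
    proof (cases "t \<in> {0<..1}")
      case True
      then have "g t \<in> G" using g by (auto simp: path_image_def)
      then have "1 / dG S (g t) \<le> 1 / dG G (g t)" using d[of "g t"] by (simp add: frac_le)
      then show ?thesis using True by (simp add: ennreal_leI)
    qed simp
  qed
  then show "\<exists>n\<in>{g. rectifiable_path g \<and> path_image g \<subseteq> S \<and> pathstart g = x \<and> pathfinish g = y}.
         arclength_integral n (\<lambda>z. 1 / dG S z) \<le> arclength_integral g (\<lambda>z. 1 / dG G z)"
    using g sub by (intro bexI[of _ g]) auto
qed


theorem theorem5p2:
  fixes \<alpha> r :: real and G :: "complex set"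
  assumes "0 < \<alpha>" and "\<alpha> < pi"
    and "open G" and "connected G" and "G \<noteq> {}"
    and "G \<subseteq> sector \<alpha>"
    and "0 < r"
    and "G \<inter> ball 0 r = sector \<alpha> \<inter> ball 0 r"
  shows "A_const G \<ge> A_const (sector \<alpha>)"
proof -
  let ?S = "sector \<alpha>"
  have opG: "open G" and sub: "G \<subseteq> ?S" and r: "0 < r" and loc: "G \<inter> ball 0 r = ?S \<inter> ball 0 r"
    using assms by auto
  have z0G: "0 \<notin> G" using sub zero_notin_sector by blast
  have dGG: "dG G z = infdist z (-G)" if "z \<in> G" for z by (rule dG_eq_compl[OF that z0G])
  have dGS: "dG ?S z = infdist z (-?S)" if "z \<in> ?S" for z by (rule dG_eq_compl[OF that zero_notin_sector])
  have da: "dG G z \<le> dG ?S z" if z: "z \<in> G" for z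
  proof -
    have "infdist z (-G) \<le> infdist z (-?S)"
      by (rule infdist_mono) (use sub zero_notin_sector in auto)
    then show ?thesis using dGG[OF z] dGS[of z] z sub by auto
  qed
  have dc: "0 < dG G z" if z: "z \<in> G" for z
  proof -
    have "infdist z (-G) > 0"
      by (rule infdist_pos_not_in_closed) (use opG z z0G in auto)
    then show ?thesis using dGG[OF z] by simp
  qed
  have db: "dG ?S z \<le> dG G z" if z: "z \<in> G" and nz: "norm z < r/2" for z
  proof -
    have zS: "z \<in> ?S" using z sub by auto
    have ne: "-G \<noteq> {}" using z0G by auto
    have "infdist z (-?S) \<le> infdist z (-G)"
      unfolding infdist_notempty[OF ne]
    proof (rule cINF_greatest[OF ne])
      fix w assume w: "w \<in> -G"
      show "infdist z (-?S) \<le> dist z w"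
      proof (cases "norm w < r")
        case True
        have "w \<in> ?S \<Longrightarrow> w \<in> ball 0 r \<Longrightarrow> w \<in> G" using loc by blast
        then have "w \<notin> ?S" using w True by (auto simp: dist_norm)
        then show ?thesis by (intro infdist_le) auto
      next
        case False
        have "infdist z (-?S) \<le> dist z 0" by (rule infdist_le) (use zero_notin_sector in auto)
        also have "\<dots> \<le> dist z w" using False nz norm_triangle_ineq2[of w z]
          by (simp add: dist_norm norm_minus_commute)
        finally show ?thesis .
      qed
    qed
    then show ?thesis using dGG[OF z] dGS[OF zS] by simp
  qed
  show ?thesis
    unfolding A_const_def
  proof (rule Inf_superset_mono, rule subsetI)
    fix e assume "e \<in> {ereal A |A. 1 \<le> A \<and> (\<forall>x\<in>G. \<forall>y\<in>G. qh_dist G x y \<le> ennreal (A * j_dist G x y))}"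
    then obtain A where eA: "e = ereal A" and A1: "1 \<le> A"
      and AG: "\<forall>x\<in>G. \<forall>y\<in>G. qh_dist G x y \<le> ennreal (A * j_dist G x y)" by blast
    have "\<forall>x\<in>?S. \<forall>y\<in>?S. qh_dist ?S x y \<le> ennreal (A * j_dist ?S x y)"
    proof (intro ballI)
      fix x y assume xS: "x \<in> ?S" and yS: "y \<in> ?S"
      define l where "l = r / (2 * (norm x + norm y + 1))"
      have pos: "0 < 2 * (norm x + norm y + 1)" using norm_ge_zero[of x] norm_ge_zero[of y] by (smt (verit))
      then have l: "l > 0" using r unfolding l_def by (intro divide_pos_pos)
      have small: "norm (l *\<^sub>R z) < r / 2" if "norm z \<le> norm x + norm y" for z
      proof -
        have "norm (l *\<^sub>R z) = l * norm z" using l by simp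
        also have "\<dots> \<le> l * (norm x + norm y)" using that l by (simp add: mult_left_mono)
        also have "\<dots> < l * (norm x + norm y + 1)" using l by simp
        also have "\<dots> = r / 2" unfolding l_def using pos by (simp add: field_simps)
        finally show ?thesis .
      qed
      define x' where "x' = l *\<^sub>R x"
      define y' where "y' = l *\<^sub>R y"
      have sx: "norm x' < r/2" and sy: "norm y' < r/2" unfolding x'_def y'_def by (intro small; simp)+
      have x'S: "x' \<in> ?S" and y'S: "y' \<in> ?S" unfolding x'_def y'_def using xS yS l by (auto intro: sector_scale)
      have inG: "w \<in> ?S \<Longrightarrow> w \<in> ball 0 r \<Longrightarrow> w \<in> G" for w using loc by blast
      have x'G: "x' \<in> G" using x'S sx r by (intro inG) (auto simp: dist_norm)
      have y'G: "y' \<in> G" using y'S sy r by (intro inG) (auto simp: dist_norm)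
      have eqx: "dG ?S x' = dG G x'" using da[OF x'G] db[OF x'G sx] by simp
      have eqy: "dG ?S y' = dG G y'" using da[OF y'G] db[OF y'G sy] by simp
      have jle: "j_dist G x' y' \<le> j_dist ?S x' y'"
        unfolding j_dist_def using eqx eqy by simp
      have jeq: "j_dist ?S x' y' = j_dist ?S x y"
      proof -
        have "dist x' y' = l * dist x y" unfolding x'_def y'_def using l
          by (simp add: dist_norm scaleR_diff_right[symmetric])
        moreover have "min (dG ?S x') (dG ?S y') = l * min (dG ?S x) (dG ?S y)"
          unfolding x'_def y'_def using dG_sector_scale[OF l xS] dG_sector_scale[OF l yS] l
          by (simp add: min_mult_distrib_left)
        ultimately show ?thesis unfolding j_dist_def using l by simp
      qed
      have jpos: "0 \<le> j_dist G x' y'"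
        unfolding j_dist_def using dc[OF x'G] dc[OF y'G] by simp
      have "qh_dist ?S x y \<le> qh_dist ?S x' y'" unfolding x'_def y'_def by (rule qh_sector_scale[OF l])
      also have "\<dots> \<le> qh_dist G x' y'"
        by (rule qh_sub[OF sub]) (use dc da in auto)
      also have "\<dots> \<le> ennreal (A * j_dist G x' y')" using AG x'G y'G by blast
      also have "\<dots> \<le> ennreal (A * j_dist ?S x y)"
        using jle jeq A1 by (intro ennreal_leI mult_left_mono) auto
      finally show "qh_dist ?S x y \<le> ennreal (A * j_dist ?S x y)" .
    qed
    then show "e \<in> {ereal A |A. 1 \<le> A \<and> (\<forall>x\<in>?S. \<forall>y\<in>?S. qh_dist ?S x y \<le> ennreal (A * j_dist ?S x y))}"
      using eA A1 by blast
  qed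
qed


end
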